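(* Let $\Omega\subset\mathbb{R}^N$ be a bounded open set and let $p,q:\Omega\to[1,\infty)$ be measurable with $q(x)\le p(x)\le p_+<\infty$ for all $x\in\Omega$. Assume that for every sequence $\{E_n\}_{n\in\mathbb{N}}$ of measurable subsets of $\Omega$ with $|E_n|\to0$ we have $\|\chi_{E_n}\|_{r'(\cdot)}\to 0$. Then $L^{p(\cdot)}(\Omega)$ is almost-compactly embedded in $L^{q(\cdot)}(\Omega)$.
   Context: $|E|$ denotes Lebesgue measure and $\chi_E$ the characteristic function of $E$. For measurable $e:\Omega\to[1,\infty)$, $\|u\|_{e(\cdot)}=\inf\{\lambda>0:\int_\Omega|u(x)/\lambda|^{e(x)}dx\le1\}$ and $L^{e(\cdot)}(\Omega)=\{u \text{ measurable}:\|u\|_{e(\cdot)}<\infty\}$. Here $r(x)=p(x)/q(x)$ and $r'(x)=r(x)/(r(x)-1)=p(x)/(p(x)-q(x))\in(1,\infty]$, with $r'(x)=\infty$ where $p(x)=q(x)$; for this possibly unbounded exponent, $\|v\|_{r'(\cdot)}=\inf\{\lambda>0:\int_{\{r'<\infty\}}|v/\lambda|^{r'(x)}dx+\operatorname{ess\,sup}_{\{r'=\infty\}}|v/\lambda|\le1\}$. Almost-compact embedding: for Banach function spaces $X,Y$ on $\Omega$, $X$ is almost-compactly embedded in $Y$ if for every sequence $\{E_n\}$ of measurable subsets of $\Omega$ with $\chi_{E_n}\to0$ pointwise a.e. in $\Omega$ one has $\lim_{n\to\infty}\sup_{\|u\|_X\le1}\|u\chi_{E_n}\|_Y=0$. 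*)

theory Defs
  imports "HOL-Analysis.Analysis"
begin

definition var_modular :: "'a::euclidean_space set \<Rightarrow> ('a \<Rightarrow> real) \<Rightarrow> ('a \<Rightarrow> real) \<Rightarrow> ennreal" where
  "var_modular \<Omega> e u = (\<integral>\<^sup>+ x \<in> \<Omega>. ennreal (\<bar>u x\<bar> powr e x) \<partial>lebesgue)"

definition var_norm :: "'a::euclidean_space set \<Rightarrow> ('a \<Rightarrow> real) \<Rightarrow> ('a \<Rightarrow> real) \<Rightarrow> ennreal" where
  "var_norm \<Omega> e u = Inf {ennreal l | l. l > 0 \<and> var_modular \<Omega> e (\<lambda>x. u x / l) \<le> 1}"

definition var_Lp :: "'a::euclidean_space set \<Rightarrow> ('a \<Rightarrow> real) \<Rightarrow> ('a \<Rightarrow> real) set" where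
  "var_Lp \<Omega> e = {u. u \<in> borel_measurable (lebesgue_on \<Omega>) \<and> var_norm \<Omega> e u < \<infinity>}"

text \<open>Essential supremum of |v| over S (w.r.t. Lebesgue measure); equals 0 if S is null.\<close>
definition ess_sup_abs :: "'a::euclidean_space set \<Rightarrow> ('a \<Rightarrow> real) \<Rightarrow> ennreal" where
  "ess_sup_abs S v = Inf {c. AE x in lebesgue. x \<in> S \<longrightarrow> ennreal \<bar>v x\<bar> \<le> c}"

definition var_modular_inf :: "'a::euclidean_space set \<Rightarrow> ('a \<Rightarrow> ereal) \<Rightarrow> ('a \<Rightarrow> real) \<Rightarrow> ennreal" where
  "var_modular_inf \<Omega> e v =
     (\<integral>\<^sup>+ x \<in> {x \<in> \<Omega>. e x < \<infinity>}. ennreal (\<bar>v x\<bar> powr real_of_ereal (e x)) \<partial>lebesgue)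
     + ess_sup_abs {x \<in> \<Omega>. e x = \<infinity>} v"

definition var_norm_inf :: "'a::euclidean_space set \<Rightarrow> ('a \<Rightarrow> ereal) \<Rightarrow> ('a \<Rightarrow> real) \<Rightarrow> ennreal" where
  "var_norm_inf \<Omega> e v = Inf {ennreal l | l. l > 0 \<and> var_modular_inf \<Omega> e (\<lambda>x. v x / l) \<le> 1}"

text \<open>r'(x) = p(x)/(p(x)-q(x)), = oo where p(x)=q(x).\<close>
definition conj_ratio_exp :: "('a \<Rightarrow> real) \<Rightarrow> ('a \<Rightarrow> real) \<Rightarrow> 'a \<Rightarrow> ereal" where
  "conj_ratio_exp p q x = (if p x = q x then \<infinity> else ereal (p x / (p x - q x)))"

definition almost_compact_embedding ::
  "'a::euclidean_space set \<Rightarrow> ('a \<Rightarrow> real) \<Rightarrow> ('a \<Rightarrow> real) \<Rightarrow> bool" where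
  "almost_compact_embedding \<Omega> p q \<longleftrightarrow>
     (\<forall>E :: nat \<Rightarrow> 'a set.
        (\<forall>n. E n \<in> sets lebesgue \<and> E n \<subseteq> \<Omega>) \<and>
        (AE x in lebesgue. x \<in> \<Omega> \<longrightarrow> (\<lambda>n. indicator (E n) x :: real) \<longlonglongrightarrow> 0)
        \<longrightarrow> (\<lambda>n. SUP u \<in> {u \<in> var_Lp \<Omega> p. var_norm \<Omega> p u \<le> 1}.
                   var_norm \<Omega> q (\<lambda>x. u x * indicator (E n) x)) \<longlonglongrightarrow> 0)"

end

theory Submission
  imports Defs
begin
lemma pt_ineq:
  fixes A p q l :: real
  assumes A: "0 \<le> A" and q1: "1 \<le> q" and qp: "q < p" and l0: "0 < l" and l1: "l < 1"
  shows "A powr q \<le> A powr p * sqrt l + sqrt l * (1/l) powr (p/(p-q))"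
proof -
  define t where "t = 1 / sqrt l"
  have "sqrt l < 1" using l1 l0 by simp
  then have t1: "1 \<le> t" using l0 by (simp add: t_def le_divide_eq)
  have tpos: "0 < t" using t1 by simp
  define r where "r = p/q"
  define s where "s = p/(p-q)"
  have r1: "r > 1" using q1 qp by (simp add: r_def)
  have s1: "s > 1" using q1 qp by (simp add: s_def)
  have rs: "1/r + 1/s = 1" using q1 qp by (simp add: r_def s_def field_simps)
  have a0: "0 \<le> A powr q / t" using tpos by simp
  have "A powr q = (A powr q / t) * t" using tpos by simp
  also have "\<dots> \<le> (A powr q / t) powr r / r + t powr s / s"
    by (rule Youngs_inequality[OF r1 s1 rs a0]) (use tpos in simp)
  also have "\<dots> \<le> (A powr q / t) powr r + t powr s"
  proof -
    have "(A powr q / t) powr r / r \<le> (A powr q / t) powr r" using r1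
      by (simp add: divide_le_eq mult_le_cancel_left1)
    moreover have "t powr s / s \<le> t powr s" using s1
      by (simp add: divide_le_eq mult_le_cancel_left1)
    ultimately show ?thesis by linarith
  qed
  also have "(A powr q / t) powr r = A powr p / t powr r"
    using A tpos q1 by (simp add: powr_divide powr_powr r_def)
  also have "\<dots> \<le> A powr p / t"
  proof -
    have "t \<le> t powr r" using t1 r1
      by (metis less_eq_real_def powr_mono powr_one_eq_one powr_one_gt_zero_iff tpos)
    then show ?thesis using tpos by (simp add: divide_left_mono)
  qed
  also have "A powr p / t = A powr p * sqrt l" by (simp add: t_def)
  also have "t = sqrt l * (1/l)" using l0 by (simp add: t_def field_simps)
  also have "(sqrt l * (1/l)) powr s = sqrt l powr s * (1/l) powr s"
    using l0 by (subst powr_mult) auto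
  also have "\<dots> \<le> sqrt l * (1/l) powr s"
  proof -
    have "sqrt l powr s \<le> sqrt l powr 1"
      using l0 l1 s1 by (intro powr_mono') auto
    then show ?thesis using l0 by (intro mult_right_mono) auto
  qed
  finally show ?thesis by (simp add: s_def)
qed
lemma ennreal_sum_le1: "(a::ennreal) + b \<le> 1 \<Longrightarrow> a \<le> 1 \<and> b \<le> 1"
proof -
  assume h: "a + b \<le> 1"
  have "a \<le> a + b" "b \<le> a + b" by (auto simp: le_iff_add add.commute)
  then show ?thesis using h by (meson order_trans)
qed

lemma main_bound:
  fixes \<Omega> :: "'a::euclidean_space set" and p q u :: "'a \<Rightarrow> real"
  assumes \<Omega>m: "\<Omega> \<in> sets lebesgue"
    and pm: "p \<in> borel_measurable (lebesgue_on \<Omega>)" and qm: "q \<in> borel_measurable (lebesgue_on \<Omega>)"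
    and um: "u \<in> borel_measurable (lebesgue_on \<Omega>)"
    and pq: "\<forall>x\<in>\<Omega>. 1 \<le> q x \<and> q x \<le> p x"
    and Em: "E \<in> sets lebesgue" and EO: "E \<subseteq> \<Omega>"
    and l0: "0 < l" and mod_u: "var_modular \<Omega> p (\<lambda>x. u x / l) \<le> 1"
    and k0: "0 < k" and k1: "k < 1"
    and modE: "var_modular_inf \<Omega> (conj_ratio_exp p q) (\<lambda>x. indicator E x / k) \<le> 1"
  shows "(\<integral>\<^sup>+x. ennreal (\<bar>u x / l\<bar> powr q x * indicator E x) \<partial>lebesgue_on \<Omega>) \<le> ennreal (2 * sqrt k)"
proof -
  let ?M = "lebesgue_on \<Omega>"
  have sp: "\<Omega> \<inter> space lebesgue \<in> sets lebesgue" using \<Omega>m by simp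
  have Em': "indicator E \<in> borel_measurable ?M"
    by (rule measurable_restrict_space1) (use Em in simp)
  define g where "g x = indicator E x * (if p x = q x then 0 else (1/k) powr (p x/(p x - q x)))" for x
  have gm: "g \<in> borel_measurable ?M" unfolding g_def using pm qm Em' by measurable
  have g0: "g x \<ge> 0" for x by (simp add: g_def)
  have I1le: "(\<integral>\<^sup>+ x \<in> {x \<in> \<Omega>. conj_ratio_exp p q x < \<infinity>}.
       ennreal (\<bar>indicator E x / k\<bar> powr real_of_ereal (conj_ratio_exp p q x)) \<partial>lebesgue) \<le> 1"
    and ESle: "ess_sup_abs {x \<in> \<Omega>. conj_ratio_exp p q x = \<infinity>} (\<lambda>x. indicator E x / k) \<le> 1"
    using modE unfolding var_modular_inf_def
    by (auto dest: ennreal_sum_le1)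
  have intg: "(\<integral>\<^sup>+x. ennreal (g x) \<partial>?M) \<le> 1"
  proof -
    have "(\<integral>\<^sup>+x. ennreal (g x) \<partial>?M) = (\<integral>\<^sup>+x. ennreal (g x) * indicator \<Omega> x \<partial>lebesgue)"
      by (rule nn_integral_restrict_space[OF sp])
    also have "\<dots> = (\<integral>\<^sup>+ x \<in> {x \<in> \<Omega>. conj_ratio_exp p q x < \<infinity>}.
       ennreal (\<bar>indicator E x / k\<bar> powr real_of_ereal (conj_ratio_exp p q x)) \<partial>lebesgue)"
      using k0 by (intro nn_integral_cong) (auto simp: g_def conj_ratio_exp_def indicator_def)
    finally show ?thesis using I1le by simp
  qed
  have intp: "(\<integral>\<^sup>+x. ennreal (\<bar>u x / l\<bar> powr p x) \<partial>?M) \<le> 1"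
    using mod_u unfolding var_modular_def by (simp add: nn_integral_restrict_space[OF sp])
  have null: "AE x in ?M. p x = q x \<longrightarrow> x \<notin> E"
  proof -
    have "ess_sup_abs {x \<in> \<Omega>. conj_ratio_exp p q x = \<infinity>} (\<lambda>x. indicator E x / k) < ennreal (1/k)"
      proof -
      have "1 < 1/k" using k0 k1 by simp
      then have "(1::ennreal) < ennreal (1/k)" by simp
      then show ?thesis using ESle by (rule le_less_trans[rotated])
    qed
    then obtain c where c: "AE x in lebesgue. x \<in> {x \<in> \<Omega>. conj_ratio_exp p q x = \<infinity>} \<longrightarrow> ennreal \<bar>indicator E x / k\<bar> \<le> c"
      and ck: "c < ennreal (1/k)"
      unfolding ess_sup_abs_def by (auto simp: Inf_less_iff)
    have "AE x in lebesgue. x \<in> \<Omega> \<longrightarrow> (p x = q x \<longrightarrow> x \<notin> E)"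
      using c
    proof (rule eventually_mono)
      fix x assume h: "x \<in> {x \<in> \<Omega>. conj_ratio_exp p q x = \<infinity>} \<longrightarrow> ennreal \<bar>indicator E x / k\<bar> \<le> c"
      show "x \<in> \<Omega> \<longrightarrow> (p x = q x \<longrightarrow> x \<notin> E)"
      proof (intro impI notI)
        assume "x \<in> \<Omega>" "p x = q x" "x \<in> E"
        then have "ennreal (1/k) \<le> c" using h k0 by (simp add: conj_ratio_exp_def)
        then show False using ck by simp
      qed
    qed
    then show ?thesis by (simp add: AE_restrict_space_iff[OF sp])
  qed
  have pw: "AE x in ?M. ennreal (\<bar>u x / l\<bar> powr q x * indicator E x)
      \<le> ennreal (sqrt k) * ennreal (\<bar>u x / l\<bar> powr p x) + ennreal (sqrt k) * ennreal (g x)"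
    using null
  proof (rule eventually_mono)
    fix x assume h: "p x = q x \<longrightarrow> x \<notin> E"
    show "ennreal (\<bar>u x / l\<bar> powr q x * indicator E x)
      \<le> ennreal (sqrt k) * ennreal (\<bar>u x / l\<bar> powr p x) + ennreal (sqrt k) * ennreal (g x)"
    proof (cases "x \<in> E")
      case False then show ?thesis by simp
    next
      case True
      with h EO pq have x: "1 \<le> q x" "q x < p x" by force+
      have "\<bar>u x / l\<bar> powr q x \<le> \<bar>u x / l\<bar> powr p x * sqrt k + sqrt k * (1/k) powr (p x/(p x - q x))"
        by (rule pt_ineq[OF _ x k0 k1]) simp
      also have "\<dots> = sqrt k * \<bar>u x / l\<bar> powr p x + sqrt k * g x"
        using True x by (simp add: g_def)
      finally have "ennreal (\<bar>u x / l\<bar> powr q x * indicator E x) \<le> ennreal (sqrt k * \<bar>u x / l\<bar> powr p x + sqrt k * g x)"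
        using True by (simp add: ennreal_leI)
      also have "\<dots> = ennreal (sqrt k) * ennreal (\<bar>u x / l\<bar> powr p x) + ennreal (sqrt k) * ennreal (g x)"
        using k0 g0[of x] by (simp add: ennreal_plus ennreal_mult)
      finally show ?thesis .
    qed
  qed
  have "(\<integral>\<^sup>+x. ennreal (\<bar>u x / l\<bar> powr q x * indicator E x) \<partial>?M)
      \<le> (\<integral>\<^sup>+x. ennreal (sqrt k) * ennreal (\<bar>u x / l\<bar> powr p x) + ennreal (sqrt k) * ennreal (g x) \<partial>?M)"
    by (rule nn_integral_mono_AE[OF pw])
  also have "\<dots> = ennreal (sqrt k) * (\<integral>\<^sup>+x. ennreal (\<bar>u x / l\<bar> powr p x) \<partial>?M) + ennreal (sqrt k) * (\<integral>\<^sup>+x. ennreal (g x) \<partial>?M)"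
    using pm um gm by (simp add: nn_integral_add nn_integral_cmult)
  also have "\<dots> \<le> ennreal (sqrt k) * 1 + ennreal (sqrt k) * 1"
    using intp intg by (intro add_mono mult_left_mono) auto
  also have "\<dots> = ennreal (2 * sqrt k)"
    using k0 by (simp flip: ennreal_plus)
  finally show ?thesis .
qed


theorem lemma3p3:
  fixes \<Omega> :: "'a::euclidean_space set" and p q :: "'a \<Rightarrow> real" and p_plus :: real
  assumes "open \<Omega>" and "bounded \<Omega>"
    and "p \<in> borel_measurable (lebesgue_on \<Omega>)" and "q \<in> borel_measurable (lebesgue_on \<Omega>)"
    and "\<forall>x\<in>\<Omega>. 1 \<le> q x \<and> q x \<le> p x \<and> p x \<le> p_plus"
    and "\<forall>E :: nat \<Rightarrow> 'a set.
           (\<forall>n. E n \<in> sets lebesgue \<and> E n \<subseteq> \<Omega>) \<and> (\<lambda>n. measure lebesgue (E n)) \<longlonglongrightarrow> 0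
           \<longrightarrow> (\<lambda>n. var_norm_inf \<Omega> (conj_ratio_exp p q) (indicator (E n))) \<longlonglongrightarrow> 0"
  shows "almost_compact_embedding \<Omega> p q"
  unfolding almost_compact_embedding_def
proof (intro allI impI)
  fix E :: "nat \<Rightarrow> 'a set"
  assume H: "(\<forall>n. E n \<in> sets lebesgue \<and> E n \<subseteq> \<Omega>) \<and>
        (AE x in lebesgue. x \<in> \<Omega> \<longrightarrow> (\<lambda>n. indicator (E n) x :: real) \<longlonglongrightarrow> 0)"
  have Em: "E n \<in> sets lebesgue" and EO: "E n \<subseteq> \<Omega>" for n using H by auto
  have \<Omega>m: "\<Omega> \<in> sets lebesgue" using assms(1) by (simp add: borel_open)
  have \<Omega>fin: "\<Omega> \<in> lmeasurable" by (rule bounded_set_imp_lmeasurable[OF assms(2) \<Omega>m])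
  define P where "P = max 1 p_plus"
  have P1: "1 \<le> P" by (simp add: P_def)
  have qP: "x \<in> \<Omega> \<Longrightarrow> q x \<le> P" for x using assms(5) by (force simp: P_def)
  have pq: "\<forall>x\<in>\<Omega>. 1 \<le> q x \<and> q x \<le> p x" using assms(5) by auto
  have meas0: "(\<lambda>n. measure lebesgue (E n)) \<longlonglongrightarrow> 0"
  proof -
    have "(\<lambda>n. integral\<^sup>L lebesgue (indicator (E n) :: 'a \<Rightarrow> real)) \<longlonglongrightarrow> integral\<^sup>L lebesgue (\<lambda>x::'a. 0::real)"
    proof (rule integral_dominated_convergence[where w="indicator \<Omega>" and M=lebesgue and f="\<lambda>x. 0::real" and s="\<lambda>n. indicator (E n)"])
      show "(\<lambda>x::'a. 0::real) \<in> borel_measurable lebesgue" by simp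
      show "indicator (E n) \<in> borel_measurable lebesgue" for n using Em by simp
      show "integrable lebesgue (indicator \<Omega> :: 'a \<Rightarrow> real)"
        using \<Omega>fin by (intro integrable_real_indicator) (auto simp: fmeasurable_def)
      show "AE x in lebesgue. (\<lambda>n. indicator (E n) x :: real) \<longlonglongrightarrow> 0"
        using H
      proof (elim conjE eventually_mono)
        fix x assume "x \<in> \<Omega> \<longrightarrow> (\<lambda>n. indicator (E n) x :: real) \<longlonglongrightarrow> 0"
        moreover have "x \<notin> \<Omega> \<Longrightarrow> (\<lambda>n. indicator (E n) x :: real) = (\<lambda>n. 0)"
          using EO by (force simp: indicator_def)
        ultimately show "(\<lambda>n. indicator (E n) x :: real) \<longlonglongrightarrow> 0" by (cases "x \<in> \<Omega>") auto
      qed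
      show "AE x in lebesgue. norm (indicator (E n) x :: real) \<le> indicator \<Omega> x" for n
        using EO by (auto simp: indicator_def)
    qed
    then show ?thesis by simp
  qed
  have hyp: "(\<lambda>n. var_norm_inf \<Omega> (conj_ratio_exp p q) (indicator (E n))) \<longlonglongrightarrow> 0"
    using assms(6) Em EO meas0 by blast
  let ?S = "\<lambda>n. SUP u \<in> {u \<in> var_Lp \<Omega> p. var_norm \<Omega> p u \<le> 1}.
                   var_norm \<Omega> q (\<lambda>x. u x * indicator (E n) x)"
  have key: "eventually (\<lambda>n. ?S n \<le> ennreal \<epsilon>) sequentially" if e0: "0 < \<epsilon>" and e1: "\<epsilon> < 1" for \<epsilon>
  proof -
    define a where "a = \<epsilon> powr P"
    define b where "b = 2 powr P"
    have a0: "0 < a" using e0 by (simp add: a_def)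
    have b0: "0 < b" by (simp add: b_def)
    have a1: "a \<le> 1" unfolding a_def using e0 e1 P1
      by (intro powr_le1) auto
    have b1: "1 \<le> b" unfolding b_def using P1 by (intro ge_one_powr_ge_zero) auto
    define \<delta> where "\<delta> = (a / (2 * b))^2"
    have d0: "0 < \<delta>" using a0 b0 by (simp add: \<delta>_def)
    have "a / (2 * b) < 1" using a0 a1 b1 by (simp add: divide_less_eq)
    then have d1: "\<delta> < 1" using a0 b0 unfolding \<delta>_def
      by (simp add: power_less_one_iff)
    have sd: "sqrt \<delta> = a / (2 * b)" using a0 b0 by (simp add: \<delta>_def)
    have "eventually (\<lambda>n. var_norm_inf \<Omega> (conj_ratio_exp p q) (indicator (E n)) < ennreal \<delta>) sequentially"
      using order_tendstoD(2)[OF hyp] d0 by simp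
    then show ?thesis
    proof (rule eventually_mono)
      fix n assume "var_norm_inf \<Omega> (conj_ratio_exp p q) (indicator (E n)) < ennreal \<delta>"
      then obtain k where k0: "0 < k" and kd': "ennreal k < ennreal \<delta>"
        and modE: "var_modular_inf \<Omega> (conj_ratio_exp p q) (\<lambda>x. indicator (E n) x / k) \<le> 1"
        unfolding var_norm_inf_def by (auto simp: Inf_less_iff)
      have kd: "k < \<delta>" using kd' k0 by (simp add: ennreal_less_iff)
      have k1: "k < 1" using kd d1 by simp
      have sk: "2 * sqrt k * (b / a) \<le> 1"
      proof -
        have "sqrt k \<le> a / (2 * b)" using kd k0 sd by (metis less_eq_real_def real_sqrt_le_iff)
        then have "2 * sqrt k * (b / a) \<le> 2 * (a / (2 * b)) * (b / a)"
          using a0 b0 by (intro mult_right_mono) auto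
        also have "\<dots> = 1" using a0 b0 by simp
        finally show ?thesis .
      qed
      show "?S n \<le> ennreal \<epsilon>"
      proof (rule SUP_least)
        fix u assume "u \<in> {u \<in> var_Lp \<Omega> p. var_norm \<Omega> p u \<le> 1}"
        then have um: "u \<in> borel_measurable (lebesgue_on \<Omega>)" and un: "var_norm \<Omega> p u \<le> 1"
          by (auto simp: var_Lp_def)
        have "var_norm \<Omega> p u < 2" using un by (meson le_less_trans one_less_numeral_iff semiring_norm(76))
        then obtain l where l0: "0 < l" and l2': "ennreal l < 2"
          and mod_u: "var_modular \<Omega> p (\<lambda>x. u x / l) \<le> 1"
          unfolding var_norm_def by (auto simp: Inf_less_iff)
        have l2: "l < 2" using l2' l0
          by (metis ennreal_less_iff less_imp_le ennreal_numeral)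
        have B: "(\<integral>\<^sup>+x. ennreal (\<bar>u x / l\<bar> powr q x * indicator (E n) x) \<partial>lebesgue_on \<Omega>) \<le> ennreal (2 * sqrt k)"
          by (rule main_bound[OF \<Omega>m assms(3) assms(4) um pq Em EO l0 mod_u k0 k1 modE])
        have sp: "\<Omega> \<inter> space lebesgue \<in> sets lebesgue" using \<Omega>m by simp
        have Eme: "indicator (E n) \<in> borel_measurable (lebesgue_on \<Omega>)"
          by (rule measurable_restrict_space1) (use Em in simp)
        have fm: "(\<lambda>x. ennreal (\<bar>u x / l\<bar> powr q x * indicator (E n) x)) \<in> borel_measurable (lebesgue_on \<Omega>)"
          using um assms(4) Eme by measurable
        have "var_modular \<Omega> q (\<lambda>x. u x * indicator (E n) x / \<epsilon>)
            = (\<integral>\<^sup>+x. ennreal (\<bar>u x * indicator (E n) x / \<epsilon>\<bar> powr q x) \<partial>lebesgue_on \<Omega>)"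
          unfolding var_modular_def by (simp add: nn_integral_restrict_space[OF sp])
        also have "\<dots> \<le> (\<integral>\<^sup>+x. ennreal (b / a) * ennreal (\<bar>u x / l\<bar> powr q x * indicator (E n) x) \<partial>lebesgue_on \<Omega>)"
        proof (rule nn_integral_mono)
          fix x assume "x \<in> space (lebesgue_on \<Omega>)"
          then have x\<Omega>: "x \<in> \<Omega>" by simp
          show "ennreal (\<bar>u x * indicator (E n) x / \<epsilon>\<bar> powr q x)
              \<le> ennreal (b / a) * ennreal (\<bar>u x / l\<bar> powr q x * indicator (E n) x)"
          proof (cases "x \<in> E n")
            case False then show ?thesis by simp
          next
            case True
            have q1: "1 \<le> q x" using pq x\<Omega> by auto
            have eqn: "\<bar>u x / \<epsilon>\<bar> = \<bar>u x / l\<bar> * (l / \<epsilon>)" using l0 e0 by (simp add: abs_mult abs_divide)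
            have "\<bar>u x / \<epsilon>\<bar> powr q x = (\<bar>u x / l\<bar> * (l / \<epsilon>)) powr q x"
              by (simp only: eqn)
            also have "\<dots> = \<bar>u x / l\<bar> powr q x * (l / \<epsilon>) powr q x"
              by (intro powr_mult)
            also have "\<dots> \<le> \<bar>u x / l\<bar> powr q x * (b / a)"
            proof (rule mult_left_mono)
              have "(l / \<epsilon>) powr q x \<le> (2 / \<epsilon>) powr q x"
                using l0 l2 e0 q1 by (intro powr_mono2) (auto simp: divide_right_mono)
              also have "\<dots> \<le> (2 / \<epsilon>) powr P"
                using e1 e0 qP[OF x\<Omega>] by (intro powr_mono) (auto simp: le_divide_eq)
              also have "\<dots> = b / a" using e0 by (simp add: a_def b_def powr_divide)
              finally show "(l / \<epsilon>) powr q x \<le> b / a" .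
            qed simp
            finally have "\<bar>u x / \<epsilon>\<bar> powr q x \<le> (b / a) * (\<bar>u x / l\<bar> powr q x)" by (simp add: mult.commute)
            then show ?thesis using True a0 b0 by (simp add: ennreal_mult[symmetric] ennreal_leI)
          qed
        qed
        also have "\<dots> = ennreal (b / a) * (\<integral>\<^sup>+x. ennreal (\<bar>u x / l\<bar> powr q x * indicator (E n) x) \<partial>lebesgue_on \<Omega>)"
          by (rule nn_integral_cmult[OF fm])
        also have "\<dots> \<le> ennreal (b / a) * ennreal (2 * sqrt k)"
          by (rule mult_left_mono[OF B]) simp
        also have "\<dots> = ennreal (2 * sqrt k * (b / a))"
          using a0 b0 k0 by (simp add: ennreal_mult[symmetric] mult.commute)
        also have "\<dots> \<le> 1" using sk by simp
        finally have "var_modular \<Omega> q (\<lambda>x. u x * indicator (E n) x / \<epsilon>) \<le> 1" .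
        then show "var_norm \<Omega> q (\<lambda>x. u x * indicator (E n) x) \<le> ennreal \<epsilon>"
          unfolding var_norm_def using e0 by (intro Inf_lower) auto
      qed
    qed
  qed
  show "?S \<longlonglongrightarrow> 0"
  proof (rule order_tendstoI)
    fix y :: ennreal assume "y < 0" then show "eventually (\<lambda>n. y < ?S n) sequentially" by simp
  next
    fix y :: ennreal assume y0: "0 < y"
    obtain z where z: "0 < z" "z < y" using dense[OF y0] by blast
    have "z < top" using z(2) top_greatest by (rule less_le_trans)
    then have "z \<noteq> \<infinity>" by simp
    then obtain e where ze: "z = ennreal e" and e0: "0 \<le> e" by (cases z) auto
    have ep: "0 < e" using z(1) ze by simp
    define \<epsilon> where "\<epsilon> = min e (1/2)"
    have "0 < \<epsilon>" "\<epsilon> < 1" using ep by (auto simp: \<epsilon>_def)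
    have ey: "ennreal \<epsilon> < y"
    proof -
      have "ennreal \<epsilon> \<le> ennreal e" by (simp add: \<epsilon>_def ennreal_leI)
      then show ?thesis using z ze by (metis le_less_trans)
    qed
    show "eventually (\<lambda>n. ?S n < y) sequentially"
      using key[OF \<open>0 < \<epsilon>\<close> \<open>\<epsilon> < 1\<close>] by (rule eventually_mono) (use ey in auto)
  qed
qed

end
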